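(* Let $a,b$ be positive integers with $3\mid a$ and $3\mid b$. If the Aztec rectangle $\mathcal{AR}_{a,b}$ has a cover by L-trominoes, then $\mathcal{AR}_{a+2,b+2}$ has a cover by L-trominoes.
   Context: A cell is a unit square $[i,i+1]\times[j,j+1]$ with $i,j\in\mathbb{Z}$, labelled $(i,j)$. An L-tromino is a set of three cells equal to a $2\times 2$ block of cells with one cell removed. A cover of a region $R$ (a finite edge-connected set of cells) is a set of pairwise disjoint L-trominoes contained in $R$ whose union is $R$. For positive integers $a,b$, the Aztec rectangle $\mathcal{AR}_{a,b}$ is (up to translation) the region consisting of the cells $(i,j)\in\mathbb{Z}^2$ with $0\le i+j\le 2b$ and $1\le j-i\le 2a+1$; it has $a$ cells along its southwestern side and $b$ cells along its northwestern side. *)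

theory Defs
  imports Main
begin

type_synonym cell = "int \<times> int"

definition block2 :: "cell \<Rightarrow> cell set" where
  "block2 c = {(fst c, snd c), (fst c + 1, snd c), (fst c, snd c + 1), (fst c + 1, snd c + 1)}"

definition is_L_tromino :: "cell set \<Rightarrow> bool" where
  "is_L_tromino T \<longleftrightarrow> (\<exists>c d. d \<in> block2 c \<and> T = block2 c - {d})"

definition is_cover :: "cell set set \<Rightarrow> cell set \<Rightarrow> bool" where
  "is_cover C R \<longleftrightarrow>
     (\<forall>T\<in>C. is_L_tromino T \<and> T \<subseteq> R) \<and>
     (\<forall>T\<in>C. \<forall>T'\<in>C. T \<noteq> T' \<longrightarrow> T \<inter> T' = {}) \<and>
     \<Union>C = R"

definition has_cover :: "cell set \<Rightarrow> bool" where
  "has_cover R \<longleftrightarrow> (\<exists>C. is_cover C R)"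

definition aztec_rect :: "nat \<Rightarrow> nat \<Rightarrow> cell set" where
  "aztec_rect a b = {(i, j). 0 \<le> i + j \<and> i + j \<le> 2 * int b \<and> 1 \<le> j - i \<and> j - i \<le> 2 * int a + 1}"

end

theory Submission imports Defs begin

lemma L3gen:
  fixes x0 y0 x1 y1 x2 y2 :: int
  assumes "\<bar>x2-x0\<bar> = 1" "\<bar>y2-y0\<bar>=1" "(x1=x0 \<and> y1=y2) \<or> (x1=x2 \<and> y1=y0)"
  shows "is_L_tromino {(x0,y0),(x1,y1),(x2,y2)}"
proof -
  have "{(x0,y0),(x1,y1),(x2,y2)} = block2 (min x0 x2, min y0 y2) - {(x0+x2-x1, y0+y2-y1)}"
   and "(x0+x2-x1, y0+y2-y1) \<in> block2 (min x0 x2, min y0 y2)"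
    using assms unfolding block2_def by (auto simp: abs_if min_def split: if_splits)
  then show ?thesis unfolding is_L_tromino_def by blast
qed

definition cpos :: "int \<Rightarrow> int \<Rightarrow> nat \<Rightarrow> int \<Rightarrow> cell" where
 "cpos A B k q = (if k=0 then (-((q+1) div 2), q div 2 + 1)
   else if k=1 then (q div 2 - A - 2, (q+1) div 2 + A + 2)
   else if k=2 then (B - A - 1 + (q+1) div 2, A+B+4 - q div 2)
   else (B+1 - q div 2, B+3 - (q+1) div 2))"

definition len :: "int \<Rightarrow> int \<Rightarrow> nat \<Rightarrow> int" where
 "len A B k = (if k=0 \<or> k=2 then 2*A+3 else 2*B+3)"

definition Rg :: "int \<Rightarrow> int \<Rightarrow> cell set" where
 "Rg A B = {(i,j). 0 \<le> i+j \<and> i+j \<le> 2*B+4 \<and> 1 \<le> j-i \<and> j-i \<le> 2*A+5}"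
definition Inn :: "int \<Rightarrow> int \<Rightarrow> cell set" where
 "Inn A B = {(i,j). 2 \<le> i+j \<and> i+j \<le> 2*B+2 \<and> 3 \<le> j-i \<and> j-i \<le> 2*A+3}"

definition labk :: "int \<Rightarrow> int \<Rightarrow> cell \<Rightarrow> nat" where
 "labk A B x = (let s = fst x + snd x; d = snd x - fst x in
    if s \<le> 1 \<and> d \<le> 2*A+3 then 0 else if d \<ge> 2*A+4 \<and> s \<le> 2*B+2 then 1
    else if s \<ge> 2*B+3 \<and> d \<ge> 3 then 2 else 3)"
definition labq :: "int \<Rightarrow> int \<Rightarrow> cell \<Rightarrow> int" where
 "labq A B x = (let s = fst x + snd x; d = snd x - fst x in
    if s \<le> 1 \<and> d \<le> 2*A+3 then d-1 else if d \<ge> 2*A+4 \<and> s \<le> 2*B+2 then s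
    else if s \<ge> 2*B+3 \<and> d \<ge> 3 then 2*A+5-d else 2*B+4-s)"

lemma k4: "(k::nat) < 4 \<Longrightarrow> k=0 \<or> k=1 \<or> k=2 \<or> k=3" by auto

lemma cpos_ev: "cpos A B k (2*m) = (if k=0 then (-m, m + 1)
   else if k=1 then (m - A - 2, m + A + 2)
   else if k=2 then (B - A - 1 + m, A+B+4 - m)
   else (B+1 - m, B+3 - m))"
  unfolding cpos_def by simp
lemma cpos_od: "cpos A B k (2*m+1) = (if k=0 then (-m-1, m + 1)
   else if k=1 then (m - A - 2, m + 1 + A + 2)
   else if k=2 then (B - A - 1 + m + 1, A+B+4 - m)
   else (B+1 - m, B+3 - m - 1))"
  unfolding cpos_def by simp

lemma cpos_ev2: "cpos A B k (2*m+2) = cpos A B k (2*(m+1))"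
  by (simp add: algebra_simps)
lemma cpos_od2: "cpos A B k (2*m+3) = cpos A B k (2*(m+1)+1)"
  by (simp add: algebra_simps)

lemma L3:
  fixes t :: int assumes "k < 4"
  shows "is_L_tromino {cpos A B k (3*t), cpos A B k (3*t+1), cpos A B k (3*t+2)}"
proof -
  define m where "m = (3*t) div 2"
  have "3*t = 2*m \<or> 3*t = 2*m+1" unfolding m_def by presburger
  then show ?thesis
  proof (elim disjE)
    assume h: "3*t = 2*m"
    have e: "3*t+1 = 2*m+1" "3*t+2 = 2*m+2" using h by simp_all
    show ?thesis unfolding e unfolding h cpos_ev2 unfolding cpos_ev cpos_od using k4[OF assms]
      by (elim disjE) (simp; rule L3gen; simp)+
  next
    assume h: "3*t = 2*m+1"
    have e: "3*t+1 = 2*m+2" "3*t+2 = 2*m+3" using h by simp_all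
    show ?thesis unfolding e unfolding h cpos_ev2 cpos_od2 unfolding cpos_ev cpos_od using k4[OF assms]
      by (elim disjE) (simp; rule L3gen; simp)+
  qed
qed

lemma cpos0: "0 \<le> i+j \<Longrightarrow> i+j \<le> 1 \<Longrightarrow> cpos A B 0 (j-i-1) = (i,j)"
  unfolding cpos_def by simp presburger
lemma cpos1: "2*A+4 \<le> j-i \<Longrightarrow> j-i \<le> 2*A+5 \<Longrightarrow> cpos A B (Suc 0) (i+j) = (i,j)"
  unfolding cpos_def by simp presburger
lemma cpos2: "2*B+3 \<le> i+j \<Longrightarrow> i+j \<le> 2*B+4 \<Longrightarrow> cpos A B 2 (2*A+5-(j-i)) = (i,j)"
  unfolding cpos_def by simp presburger
lemma cpos3: "1 \<le> j-i \<Longrightarrow> j-i \<le> 2 \<Longrightarrow> cpos A B 3 (2*B+4-(i+j)) = (i,j)"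
  unfolding cpos_def by simp presburger

lemma L2:
  assumes "0 \<le> A" "0 \<le> B" "x \<in> Rg A B - Inn A B"
  shows "labk A B x < 4 \<and> 0 \<le> labq A B x \<and> labq A B x < len A B (labk A B x) \<and> cpos A B (labk A B x) (labq A B x) = x"
proof -
  obtain i j where x: "x = (i,j)" by fastforce
  have r: "0 \<le> i+j" "i+j \<le> 2*B+4" "1 \<le> j-i" "j-i \<le> 2*A+5"
     and n: "\<not> (2 \<le> i+j \<and> i+j \<le> 2*B+2 \<and> 3 \<le> j-i \<and> j-i \<le> 2*A+3)"
    using assms(3) unfolding x Rg_def Inn_def by auto
  show ?thesis
  proof (cases "i+j \<le> 1 \<and> j-i \<le> 2*A+3")
    case True then show ?thesis using r unfolding x labk_def labq_def Let_def len_def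
      by (simp add: cpos0)
  next
    case c1: False
    show ?thesis
    proof (cases "j-i \<ge> 2*A+4 \<and> i+j \<le> 2*B+2")
      case True then show ?thesis using r c1 unfolding x labk_def labq_def Let_def len_def
        by (simp add: cpos1)
    next
      case c2: False
      show ?thesis
      proof (cases "i+j \<ge> 2*B+3 \<and> j-i \<ge> 3")
        case True then show ?thesis using assms(1,2) r c1 c2 unfolding x labk_def labq_def Let_def len_def
          by (simp add: cpos2)
      next
        case c3: False
        have "j - i \<le> 2" using assms(1,2) r n c1 c2 c3 by linarith
        moreover have "2 \<le> i+j" using assms(1,2) r n c1 c2 c3 by linarith
        ultimately show ?thesis using assms(1,2) r c1 c2 c3 unfolding x labk_def labq_def Let_def len_def
          by (simp add: cpos3)
      qed
    qed
  qed
qed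

lemma L1:
  assumes "0 \<le> A" "0 \<le> B" "k < 4" "0 \<le> q" "q < len A B k"
  shows "cpos A B k q \<in> Rg A B - Inn A B \<and> labk A B (cpos A B k q) = k \<and> labq A B (cpos A B k q) = q"
proof -
  define m where "m = q div 2"
  have "q = 2*m \<or> q = 2*m+1" unfolding m_def by presburger
  then show ?thesis
  proof (elim disjE)
    assume h: "q = 2*m"
    show ?thesis using k4[OF assms(3)] assms unfolding h cpos_ev
      by (elim disjE) (simp_all add: len_def Rg_def Inn_def labk_def labq_def Let_def)
  next
    assume h: "q = 2*m+1"
    show ?thesis using k4[OF assms(3)] assms unfolding h cpos_od
      by (elim disjE) (simp_all add: len_def Rg_def Inn_def labk_def labq_def Let_def)
  qed
qed

definition sh :: "cell \<Rightarrow> cell" where "sh p = (fst p, snd p + 2)"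

lemma inj_sh: "inj sh" unfolding inj_def sh_def by auto

lemma sh_L: assumes "is_L_tromino T" shows "is_L_tromino (sh ` T)"
proof -
  obtain c d where d: "d \<in> block2 c" and T: "T = block2 c - {d}"
    using assms unfolding is_L_tromino_def by blast
  have "sh ` T = sh ` block2 c - {sh d}" unfolding T using inj_sh
    by (simp add: image_set_diff)
  also have "sh ` block2 c = block2 (sh c)" unfolding block2_def sh_def by auto
  finally have "sh ` T = block2 (sh c) - {sh d}" .
  moreover have "sh d \<in> block2 (sh c)" using d unfolding block2_def sh_def by auto
  ultimately show ?thesis unfolding is_L_tromino_def by blast
qed

lemma sh_AR: "sh ` aztec_rect a b = Inn (int a) (int b)"
proof
  show "sh ` aztec_rect a b \<subseteq> Inn (int a) (int b)"
    unfolding aztec_rect_def Inn_def sh_def by auto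
  show "Inn (int a) (int b) \<subseteq> sh ` aztec_rect a b"
  proof
    fix x assume x: "x \<in> Inn (int a) (int b)"
    obtain i j where xe: "x = (i,j)" by fastforce
    have "(i, j-2) \<in> aztec_rect a b" using x unfolding xe Inn_def aztec_rect_def by auto
    moreover have "x = sh (i, j-2)" unfolding xe sh_def by simp
    ultimately show "x \<in> sh ` aztec_rect a b" by blast
  qed
qed

lemma AR_big: "aztec_rect (a+2) (b+2) = Rg (int a) (int b)"
  unfolding aztec_rect_def Rg_def by (auto simp: algebra_simps)

lemma Inn_sub: "Inn A B \<subseteq> Rg A B" unfolding Inn_def Rg_def by auto

definition tro :: "int \<Rightarrow> int \<Rightarrow> nat \<Rightarrow> int \<Rightarrow> cell set" where
  "tro A B k t = {cpos A B k (3*t), cpos A B k (3*t+1), cpos A B k (3*t+2)}"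

definition Fr :: "int \<Rightarrow> int \<Rightarrow> cell set set" where
  "Fr A B = {tro A B k t | k t. k < 4 \<and> 0 \<le> t \<and> 3*t+2 < len A B k}"

lemma tro_mem:
  assumes "0 \<le> A" "0 \<le> B" "k < 4" "0 \<le> t" "3*t+2 < len A B k" "x \<in> tro A B k t"
  shows "x \<in> Rg A B - Inn A B \<and> labk A B x = k \<and> labq A B x div 3 = t"
proof -
  have "x = cpos A B k (3*t+0) \<or> x = cpos A B k (3*t+1) \<or> x = cpos A B k (3*t+2)"
    using assms(6) unfolding tro_def by simp
  then obtain r where r: "r = 0 \<or> r = 1 \<or> r = (2::int)" and x: "x = cpos A B k (3*t+r)"
    by blast
  have "0 \<le> 3*t+r" "3*t+r < len A B k" using r assms by auto
  from L1[OF assms(1-3) this] show ?thesis unfolding x using r by auto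
qed

lemma Fr_union:
  assumes "0 \<le> A" "0 \<le> B" "3 dvd A" "3 dvd B"
  shows "\<Union>(Fr A B) = Rg A B - Inn A B"
proof
  show "\<Union>(Fr A B) \<subseteq> Rg A B - Inn A B"
    unfolding Fr_def using tro_mem[OF assms(1,2)] by blast
  show "Rg A B - Inn A B \<subseteq> \<Union>(Fr A B)"
  proof
    fix x assume x: "x \<in> Rg A B - Inn A B"
    define k where "k = labk A B x"
    define q where "q = labq A B x"
    have h: "k < 4" "0 \<le> q" "q < len A B k" "cpos A B k q = x"
      using L2[OF assms(1,2) x] unfolding k_def q_def by auto
    have d: "3 dvd len A B k" using assms(3,4) unfolding len_def by auto
    obtain L where L: "len A B k = 3*L" using d by blast
    have t1: "0 \<le> q div 3" using h(2) by simp
    have "q div 3 < L" using h(3) unfolding L by linarith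
    then have t2: "3*(q div 3)+2 < len A B k" unfolding L by linarith
    note t = t1 t2
    have "q = 3*(q div 3) \<or> q = 3*(q div 3)+1 \<or> q = 3*(q div 3)+2" by presburger
    then have "x \<in> tro A B k (q div 3)" unfolding tro_def using h(4) by auto
    moreover have "tro A B k (q div 3) \<in> Fr A B" unfolding Fr_def using h(1) t by blast
    ultimately show "x \<in> \<Union>(Fr A B)" by blast
  qed
qed

lemma Fr_disj:
  assumes "0 \<le> A" "0 \<le> B" "T \<in> Fr A B" "T' \<in> Fr A B" "T \<noteq> T'"
  shows "T \<inter> T' = {}"
proof (rule ccontr)
  assume "T \<inter> T' \<noteq> {}"
  then obtain x where x: "x \<in> T" "x \<in> T'" by blast
  obtain k t where T: "T = tro A B k t" "k < 4" "0 \<le> t" "3*t+2 < len A B k"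
    using assms(3) unfolding Fr_def by blast
  obtain k' t' where T': "T' = tro A B k' t'" "k' < 4" "0 \<le> t'" "3*t'+2 < len A B k'"
    using assms(4) unfolding Fr_def by blast
  have "labk A B x = k \<and> labq A B x div 3 = t"
    using tro_mem[OF assms(1,2) T(2-4)] x(1) T(1) by blast
  moreover have "labk A B x = k' \<and> labq A B x div 3 = t'"
    using tro_mem[OF assms(1,2) T'(2-4)] x(2) T'(1) by blast
  ultimately show False using assms(5) T(1) T'(1) by auto
qed

lemma Fr_L: "T \<in> Fr A B \<Longrightarrow> is_L_tromino T"
  unfolding Fr_def tro_def using L3 by blast

theorem lemma2:
  fixes a b :: nat
  assumes "0 < a" and "0 < b" and "3 dvd a" and "3 dvd b"
    and "has_cover (aztec_rect a b)"
  shows "has_cover (aztec_rect (a + 2) (b + 2))"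
proof -
  define A where "A = int a"
  define B where "B = int b"
  have AB: "0 \<le> A" "0 \<le> B" "3 dvd A" "3 dvd B" using assms(3,4) unfolding A_def B_def by auto
  obtain C where C: "is_cover C (aztec_rect a b)" using assms(5) unfolding has_cover_def by blast
  have CL: "\<And>T. T \<in> C \<Longrightarrow> is_L_tromino T" and Csub: "\<And>T. T \<in> C \<Longrightarrow> T \<subseteq> aztec_rect a b"
    and Cdisj: "\<And>T T'. T \<in> C \<Longrightarrow> T' \<in> C \<Longrightarrow> T \<noteq> T' \<Longrightarrow> T \<inter> T' = {}"
    and Cun: "\<Union>C = aztec_rect a b" using C unfolding is_cover_def by auto
  have SA: "sh ` aztec_rect a b = Inn A B" unfolding A_def B_def by (rule sh_AR)
  have RB: "aztec_rect (a+2) (b+2) = Rg A B" unfolding A_def B_def by (rule AR_big)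
  define C' where "C' = (image sh) ` C \<union> Fr A B"
  have S1: "sh ` T \<subseteq> Inn A B" if "T \<in> C" for T
  proof -
    have "sh ` T \<subseteq> sh ` aztec_rect a b" using Csub[OF that] by (rule image_mono)
    then show ?thesis unfolding SA .
  qed
  have F1: "T \<subseteq> Rg A B - Inn A B" if "T \<in> Fr A B" for T
    using that Fr_union[OF AB] by blast
  have II: "Inn A B \<subseteq> Rg A B" by (rule Inn_sub)
  have P1: "is_L_tromino T \<and> T \<subseteq> Rg A B" if "T \<in> C'" for T
  proof -
    from that consider (a) U where "U \<in> C" "T = sh ` U" | (b) "T \<in> Fr A B" unfolding C'_def by blast
    then show "is_L_tromino T \<and> T \<subseteq> Rg A B"
    proof cases
      case a then show ?thesis using CL[OF a(1)] sh_L S1[OF a(1)] II by auto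
    next
      case b then show ?thesis using Fr_L F1[OF b] by auto
    qed
  qed
  have P2: "T \<inter> T' = {}" if T: "T \<in> C'" and T': "T' \<in> C'" and ne: "T \<noteq> T'" for T T'
  proof -
    show "T \<inter> T' = {}"
    proof (cases "T \<in> Fr A B")
      case TF: True
      show ?thesis
      proof (cases "T' \<in> Fr A B")
        case True show ?thesis using Fr_disj[OF AB(1,2) TF True ne] .
      next
        case False
        then obtain U' where U': "U' \<in> C" "T' = sh ` U'" using T' unfolding C'_def by blast
        have "T' \<subseteq> Inn A B" using S1[OF U'(1)] U'(2) by simp
        moreover have "T \<subseteq> Rg A B - Inn A B" using F1[OF TF] .
        ultimately show ?thesis by blast
      qed
    next
      case TF: False
      then obtain U where U: "U \<in> C" "T = sh ` U" using T unfolding C'_def by blast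
      show ?thesis
      proof (cases "T' \<in> Fr A B")
        case True
        have "T \<subseteq> Inn A B" using S1[OF U(1)] U(2) by simp
        moreover have "T' \<subseteq> Rg A B - Inn A B" using F1[OF True] .
        ultimately show ?thesis by blast
      next
        case False
        then obtain U' where U': "U' \<in> C" "T' = sh ` U'" using T' unfolding C'_def by blast
        have "U \<noteq> U'" using ne U(2) U'(2) by blast
        then have "U \<inter> U' = {}" using Cdisj U(1) U'(1) by blast
        then have "sh ` (U \<inter> U') = {}" by simp
        moreover have "sh ` (U \<inter> U') = sh ` U \<inter> sh ` U'" using inj_sh by (rule image_Int)
        ultimately show ?thesis unfolding U(2) U'(2) by simp
      qed
    qed
  qed
  have P3: "\<Union>C' = Rg A B"
  proof -
    have "\<Union>C' = (\<Union>U\<in>C. sh ` U) \<union> \<Union>(Fr A B)" unfolding C'_def by blast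
    also have "(\<Union>U\<in>C. sh ` U) = sh ` \<Union>C" by (rule image_Union[symmetric])
    also have "\<dots> = Inn A B" unfolding Cun SA ..
    also have "\<Union>(Fr A B) = Rg A B - Inn A B" by (rule Fr_union[OF AB])
    also have "Inn A B \<union> (Rg A B - Inn A B) = Rg A B" using II by blast
    finally show ?thesis .
  qed
  have "is_cover C' (Rg A B)" unfolding is_cover_def using P1 P2 P3 by blast
  then show ?thesis unfolding has_cover_def RB by blast
qed

end
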